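(* Consider a round of the triadic majority rule process among participants $x,y,z$ (nodes of a median graph) in which the initial current winner is $x$, the initial proposer is $y$, and all three participants follow truthful bargaining. Then the round ends with winner $\hat w = m(x,y,z)$.
   Context: $G$ is a finite connected unweighted undirected median graph: with shortest-path distance $d$ and $I_{ab}=\{w:d(a,w)+d(w,b)=d(a,b)\}$, $\lvert I_{ab}\cap I_{ac}\cap I_{bc}\rvert=1$ for all $a,b,c$, and $m(a,b,c)$ is that node. Triadic majority rule round: there is a current winner and a proposer. In each step the proposer proposes a node $a$ or a motion to end; all three vote simultaneously to accept or reject. If an alternative is accepted by majority it becomes the current winner. If the vote is unanimous the proposer stays; otherwise the participant in the minority becomes proposer. If a motion to end is accepted by majority the round ends, its winner being the current winner. Truthful bargaining: with current winner $w$, the preferred points of $u$ are $P_u=I_{uw}\setminus\{w\}$, its bargaining points are $B_u=(P_u\cap P_{u'})\cup(P_u\cap P_{u''})$ ($u',u''$ the other two), a best bargaining point is a point of $B_u$ closest to $u$. The participant proposes a best bargaining point if $B_u\neq\emptyset$ and a motion to end otherwise; accepts an alternative $a$ iff $d(u,a)<d(u,w)$; accepts a motion to end iff $B_u=\emptyset$; ties broken arbitrarily. *)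

theory Defs
  imports Main
begin

fun walk :: "('a \<Rightarrow> 'a \<Rightarrow> bool) \<Rightarrow> 'a list \<Rightarrow> bool" where
  "walk E [] = False"
| "walk E [v] = True"
| "walk E (a # b # xs) = (E a b \<and> walk E (b # xs))"

definition gdist :: "('a \<Rightarrow> 'a \<Rightarrow> bool) \<Rightarrow> 'a \<Rightarrow> 'a \<Rightarrow> nat" where
  "gdist E a b = (LEAST n. \<exists>xs. walk E xs \<and> hd xs = a \<and> last xs = b \<and> length xs = Suc n)"

definition interval :: "'a set \<Rightarrow> ('a \<Rightarrow> 'a \<Rightarrow> bool) \<Rightarrow> 'a \<Rightarrow> 'a \<Rightarrow> 'a set" where
  "interval V E a b = {w \<in> V. gdist E a w + gdist E w b = gdist E a b}"

definition median_graph :: "'a set \<Rightarrow> ('a \<Rightarrow> 'a \<Rightarrow> bool) \<Rightarrow> bool" where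
  "median_graph V E \<longleftrightarrow>
     finite V \<and> V \<noteq> {} \<and>
     (\<forall>a b. E a b \<longrightarrow> a \<in> V \<and> b \<in> V) \<and>
     (\<forall>a b. E a b \<longrightarrow> E b a) \<and>
     (\<forall>a. \<not> E a a) \<and>
     (\<forall>a\<in>V. \<forall>b\<in>V. \<exists>xs. walk E xs \<and> hd xs = a \<and> last xs = b) \<and>
     (\<forall>a\<in>V. \<forall>b\<in>V. \<forall>c\<in>V.
        card (interval V E a b \<inter> interval V E a c \<inter> interval V E b c) = 1)"

definition median :: "'a set \<Rightarrow> ('a \<Rightarrow> 'a \<Rightarrow> bool) \<Rightarrow> 'a \<Rightarrow> 'a \<Rightarrow> 'a \<Rightarrow> 'a" where
  "median V E a b c = (THE w. w \<in> interval V E a b \<inter> interval V E a c \<inter> interval V E b c)"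

text \<open>The three participants (distinct agents; their nodes may coincide).\<close>
datatype agent = X | Y | Z

definition loc :: "'a \<Rightarrow> 'a \<Rightarrow> 'a \<Rightarrow> agent \<Rightarrow> 'a" where
  "loc x y z u = (case u of X \<Rightarrow> x | Y \<Rightarrow> y | Z \<Rightarrow> z)"

definition pref :: "'a set \<Rightarrow> ('a \<Rightarrow> 'a \<Rightarrow> bool) \<Rightarrow> (agent \<Rightarrow> 'a) \<Rightarrow> agent \<Rightarrow> 'a \<Rightarrow> 'a set" where
  "pref V E pos u w = interval V E (pos u) w - {w}"

definition barg :: "'a set \<Rightarrow> ('a \<Rightarrow> 'a \<Rightarrow> bool) \<Rightarrow> (agent \<Rightarrow> 'a) \<Rightarrow> agent \<Rightarrow> 'a \<Rightarrow> 'a set" where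
  "barg V E pos u w = (\<Union>v \<in> UNIV - {u}. pref V E pos u w \<inter> pref V E pos v w)"

definition best_barg :: "'a set \<Rightarrow> ('a \<Rightarrow> 'a \<Rightarrow> bool) \<Rightarrow> (agent \<Rightarrow> 'a) \<Rightarrow> agent \<Rightarrow> 'a \<Rightarrow> 'a \<Rightarrow> bool" where
  "best_barg V E pos u w a \<longleftrightarrow> a \<in> barg V E pos u w \<and>
     (\<forall>b \<in> barg V E pos u w. gdist E (pos u) a \<le> gdist E (pos u) b)"

text \<open>Outcome of a simultaneous vote: whether the majority accepted, and the next proposer
  (the proposer stays if unanimous, otherwise the unique participant in the minority).\<close>
definition majority :: "(agent \<Rightarrow> bool) \<Rightarrow> bool" where
  "majority acc \<longleftrightarrow> 2 \<le> card {u. acc u}"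

definition next_proposer :: "(agent \<Rightarrow> bool) \<Rightarrow> agent \<Rightarrow> agent" where
  "next_proposer acc p =
     (if (\<forall>u v. acc u = acc v) then p else (THE u. acc u \<noteq> majority acc))"

text \<open>State of a round: (current winner, proposer).  One step leads either to a new state
  (Inl) or ends the round with a winner (Inr).  Non-determinism models arbitrary tie-breaking
  among best bargaining points.\<close>
definition tmr_step :: "'a set \<Rightarrow> ('a \<Rightarrow> 'a \<Rightarrow> bool) \<Rightarrow> (agent \<Rightarrow> 'a) \<Rightarrow>
    'a \<times> agent \<Rightarrow> ('a \<times> agent + 'a) set" where
  "tmr_step V E pos s =
     (case s of (w, p) \<Rightarrow>
       if barg V E pos p w \<noteq> {} then
         {Inl (if majority acc then a else w, next_proposer acc p) | a acc.
            best_barg V E pos p w a \<and>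
            acc = (\<lambda>u. gdist E (pos u) a < gdist E (pos u) w)}
       else
         (let acc = (\<lambda>u. barg V E pos u w = {}) in
           if majority acc then {Inr w} else {Inl (w, next_proposer acc p)}))"

definition tmr_cont :: "'a set \<Rightarrow> ('a \<Rightarrow> 'a \<Rightarrow> bool) \<Rightarrow> (agent \<Rightarrow> 'a) \<Rightarrow>
    'a \<times> agent \<Rightarrow> 'a \<times> agent \<Rightarrow> bool" where
  "tmr_cont V E pos s s' \<longleftrightarrow> Inl s' \<in> tmr_step V E pos s"

end

theory Submission
  imports Defs
begin

lemma walk_ne: "walk E xs \<Longrightarrow> xs \<noteq> []" by (cases xs) auto

lemma walk_app: "walk E xs \<Longrightarrow> walk E (last xs # ys) \<Longrightarrow> walk E (xs @ ys)"
  by (induction E xs rule: walk.induct) auto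

lemma walk_rev: "(\<forall>a b. E a b \<longrightarrow> E b a) \<Longrightarrow> walk E xs \<Longrightarrow> walk E (rev xs)"
proof (induction E xs rule: walk.induct)
  case (3 E a b xs)
  then have "walk E (rev (b#xs))" by simp
  moreover have "walk E (last (rev (b#xs)) # [a])" using 3 by simp
  ultimately have "walk E (rev (b#xs) @ [a])" by (rule walk_app)
  then show ?case by simp
qed auto

lemma gd_le: "walk E xs \<Longrightarrow> hd xs = a \<Longrightarrow> last xs = b \<Longrightarrow> Suc (gdist E a b) \<le> length xs"
proof -
  assume h: "walk E xs" "hd xs = a" "last xs = b"
  then have "xs \<noteq> []" using walk_ne by blast
  then have l: "length xs = Suc (length xs - 1)" by simp
  have "gdist E a b \<le> length xs - 1" unfolding gdist_def
    by (rule Least_le) (use h l in blast)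
  then show ?thesis using l by simp
qed

lemma gd_ex: "median_graph V E \<Longrightarrow> a \<in> V \<Longrightarrow> b \<in> V \<Longrightarrow>
  \<exists>xs. walk E xs \<and> hd xs = a \<and> last xs = b \<and> length xs = Suc (gdist E a b)"
proof -
  assume G: "median_graph V E" and ab: "a \<in> V" "b \<in> V"
  obtain xs where h: "walk E xs" "hd xs = a" "last xs = b"
    using G ab unfolding median_graph_def by blast
  then have "xs \<noteq> []" using walk_ne by blast
  then have l: "length xs = Suc (length xs - 1)" by simp
  have "\<exists>n xs. walk E xs \<and> hd xs = a \<and> last xs = b \<and> length xs = Suc n"
    using h l by blast
  then show ?thesis unfolding gdist_def by (rule LeastI_ex)
qed

lemma gd_refl: "gdist E a a = 0"
  using gd_le[of E "[a]" a a] by simp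

lemma gd_zero: "median_graph V E \<Longrightarrow> a \<in> V \<Longrightarrow> b \<in> V \<Longrightarrow> gdist E a b = 0 \<Longrightarrow> a = b"
proof -
  assume G: "median_graph V E" "a \<in> V" "b \<in> V" "gdist E a b = 0"
  then obtain xs where h: "walk E xs" "hd xs = a" "last xs = b" "length xs = 1"
    using gd_ex[OF G(1-3)] by auto
  then obtain v where "xs = [v]" by (cases xs) auto
  then show ?thesis using h by simp
qed

lemma gd_sym_le: "median_graph V E \<Longrightarrow> a \<in> V \<Longrightarrow> b \<in> V \<Longrightarrow> gdist E a b \<le> gdist E b a"
proof -
  assume G: "median_graph V E" "a \<in> V" "b \<in> V"
  then obtain xs where h: "walk E xs" "hd xs = b" "last xs = a" "length xs = Suc (gdist E b a)"
    using gd_ex[OF G(1,3,2)] by auto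
  have s: "\<forall>a b. E a b \<longrightarrow> E b a" using G(1) unfolding median_graph_def by blast
  have ne: "xs \<noteq> []" using h walk_ne by blast
  have "walk E (rev xs)" using walk_rev[OF s h(1)] .
  moreover have "hd (rev xs) = a" "last (rev xs) = b" using h ne by (auto simp: hd_rev last_rev)
  ultimately show ?thesis using gd_le[of E "rev xs" a b] h by simp
qed

lemma gd_sym: "median_graph V E \<Longrightarrow> a \<in> V \<Longrightarrow> b \<in> V \<Longrightarrow> gdist E a b = gdist E b a"
  using gd_sym_le by (metis antisym)

lemma gd_tri: "median_graph V E \<Longrightarrow> a \<in> V \<Longrightarrow> b \<in> V \<Longrightarrow> c \<in> V \<Longrightarrow>
   gdist E a c \<le> gdist E a b + gdist E b c"
proof -
  assume G: "median_graph V E" "a \<in> V" "b \<in> V" "c \<in> V"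
  obtain xs where h: "walk E xs" "hd xs = a" "last xs = b" "length xs = Suc (gdist E a b)"
    using gd_ex[OF G(1,2,3)] by auto
  obtain ys where k: "walk E ys" "hd ys = b" "last ys = c" "length ys = Suc (gdist E b c)"
    using gd_ex[OF G(1,3,4)] by auto
  obtain ys' where ys: "ys = b # ys'" using k by (cases ys) auto
  have w: "walk E (xs @ ys')" using walk_app[of E xs ys'] h k ys by simp
  have ne: "xs \<noteq> []" using h walk_ne by blast
  have "hd (xs @ ys') = a" using h ne by simp
  moreover have "last (xs @ ys') = c" using h k ys ne by (cases "ys' = []") auto
  ultimately have "Suc (gdist E a c) \<le> length (xs @ ys')" using gd_le[OF w] by simp
  then show ?thesis using h k ys by simp
qed

lemma I_mem: "w \<in> interval V E a b \<longleftrightarrow> w \<in> V \<and> gdist E a w + gdist E w b = gdist E a b"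
  unfolding interval_def by simp

lemma I_sym: "median_graph V E \<Longrightarrow> a \<in> V \<Longrightarrow> b \<in> V \<Longrightarrow> interval V E a b = interval V E b a"
proof -
  assume G: "median_graph V E" "a \<in> V" "b \<in> V"
  have "\<And>w. w \<in> V \<Longrightarrow> gdist E a w + gdist E w b = gdist E a b \<longleftrightarrow> gdist E b w + gdist E w a = gdist E b a"
  proof -
    fix w assume wV: "w \<in> V"
    show "gdist E a w + gdist E w b = gdist E a b \<longleftrightarrow> gdist E b w + gdist E w a = gdist E b a"
      using gd_sym[OF G(1) G(2) wV] gd_sym[OF G(1) wV G(3)] gd_sym[OF G(1) G(2) G(3)] by linarith
  qed
  then show ?thesis unfolding interval_def by blast
qed

lemma I_mono: "median_graph V E \<Longrightarrow> y \<in> V \<Longrightarrow> x \<in> V \<Longrightarrow>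
  m \<in> interval V E y x \<Longrightarrow> a \<in> interval V E m x \<Longrightarrow>
  a \<in> interval V E y x \<and> gdist E y a = gdist E y m + gdist E m a"
proof -
  assume G: "median_graph V E" "y \<in> V" "x \<in> V" and h: "m \<in> interval V E y x" "a \<in> interval V E m x"
  have mV: "m \<in> V" and aV: "a \<in> V" using h by (auto simp: I_mem)
  have e1: "gdist E y m + gdist E m x = gdist E y x" and e2: "gdist E m a + gdist E a x = gdist E m x"
    using h by (auto simp: I_mem)
  have t1: "gdist E y a \<le> gdist E y m + gdist E m a" using gd_tri[OF G(1,2) mV aV] .
  have t2: "gdist E y x \<le> gdist E y a + gdist E a x" using gd_tri[OF G(1,2) aV G(3)] .
  have "gdist E y a + gdist E a x = gdist E y x" "gdist E y a = gdist E y m + gdist E m a"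
    using e1 e2 t1 t2 by linarith+
  then show ?thesis using aV unfolding I_mem by blast
qed

lemma I_med: "median_graph V E \<Longrightarrow> x \<in> V \<Longrightarrow> y \<in> V \<Longrightarrow> z \<in> V \<Longrightarrow>
  a \<in> interval V E x y \<Longrightarrow> a \<in> interval V E x z \<Longrightarrow>
  t \<in> interval V E x y \<Longrightarrow> t \<in> interval V E x z \<Longrightarrow> t \<in> interval V E y z \<Longrightarrow>
  a \<in> interval V E x t"
proof -
  assume G: "median_graph V E" "x \<in> V" "y \<in> V" "z \<in> V"
    and a: "a \<in> interval V E x y" "a \<in> interval V E x z"
    and t: "t \<in> interval V E x y" "t \<in> interval V E x z" "t \<in> interval V E y z"
  have aV: "a \<in> V" using a by (simp add: I_mem)
  have "card (interval V E a y \<inter> interval V E a z \<inter> interval V E y z) = 1"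
    using G aV unfolding median_graph_def by blast
  then obtain u where "interval V E a y \<inter> interval V E a z \<inter> interval V E y z = {u}"
    by (rule card_1_singletonE)
  then obtain m' where m': "m' \<in> interval V E a y" "m' \<in> interval V E a z" "m' \<in> interval V E y z"
    by blast
  have 1: "m' \<in> interval V E x y \<and> gdist E x m' = gdist E x a + gdist E a m'"
    using I_mono[OF G(1,2,3) a(1) m'(1)] .
  have 2: "m' \<in> interval V E x z" using I_mono[OF G(1,2,4) a(2) m'(2)] by blast
  have "card (interval V E x y \<inter> interval V E x z \<inter> interval V E y z) = 1"
    using G unfolding median_graph_def by blast
  then obtain u where u: "interval V E x y \<inter> interval V E x z \<inter> interval V E y z = {u}"
    by (rule card_1_singletonE)
  have "m' = u" using u 1 2 m'(3) by blast
  moreover have "t = u" using u t by blast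
  ultimately have "m' = t" by simp
  have "gdist E a m' + gdist E m' y = gdist E a y" using m'(1) unfolding I_mem by blast
  then show ?thesis using 1 aV \<open>m' = t\<close> unfolding I_mem by auto
qed

lemma I_refl_l: "a \<in> V \<Longrightarrow> a \<in> interval V E a b"
  by (simp add: I_mem gd_refl)

lemma meet: "median_graph V E \<Longrightarrow> p \<in> V \<Longrightarrow> q \<in> V \<Longrightarrow> m \<in> interval V E p q \<Longrightarrow>
   interval V E p m \<inter> interval V E q m \<subseteq> {m}"
proof
  fix a assume G: "median_graph V E" "p \<in> V" "q \<in> V" and mI: "m \<in> interval V E p q"
    and a: "a \<in> interval V E p m \<inter> interval V E q m"
  have mV: "m \<in> V" using mI by (simp add: I_mem)
  have a1: "a \<in> interval V E m p" using a I_sym[OF G(1) G(2) mV] by blast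
  have a2: "a \<in> interval V E m q" using a I_sym[OF G(1) G(3) mV] by blast
  have "a \<in> interval V E m m"
    using I_med[OF G(1) mV G(2) G(3) a1 a2 I_refl_l[OF mV] I_refl_l[OF mV] mI] .
  then have "gdist E m a = 0" "a \<in> V" by (auto simp: I_mem gd_refl)
  then have "m = a" using gd_zero[OF G(1) mV] by blast
  then show "a \<in> {m}" by simp
qed

lemma agent_UNIV: "(UNIV :: agent set) = {X, Y, Z}"
  using agent.exhaust by auto

lemma maj_true: "majority (\<lambda>u. True)"
  unfolding majority_def by (simp add: agent_UNIV)

theorem lemmaI1:
  fixes V :: "'a set" and E :: "'a \<Rightarrow> 'a \<Rightarrow> bool" and x y z :: 'a
  assumes "median_graph V E" and "x \<in> V" and "y \<in> V" and "z \<in> V"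
  defines "pos \<equiv> loc x y z"
  shows "(\<not> (\<exists>f. f 0 = (x, Y) \<and> (\<forall>n. tmr_cont V E pos (f n) (f (Suc n))))) \<and>
         (\<forall>s. (tmr_cont V E pos)\<^sup>*\<^sup>* (x, Y) s \<longrightarrow>
               tmr_step V E pos s \<noteq> {} \<and>
               (\<forall>w'. Inr w' \<in> tmr_step V E pos s \<longrightarrow> w' = median V E x y z))"
proof -
  note G = assms(1-4)
  define m where "m = median V E x y z"
  have "card (interval V E x y \<inter> interval V E x z \<inter> interval V E y z) = 1"
    using G unfolding median_graph_def by blast
  then obtain u where u: "interval V E x y \<inter> interval V E x z \<inter> interval V E y z = {u}"
    by (rule card_1_singletonE)
  have "m = u" unfolding m_def median_def using u by simp
  then have mxy: "m \<in> interval V E x y" and mxz: "m \<in> interval V E x z" and myz: "m \<in> interval V E y z"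
    using u by auto
  have mV: "m \<in> V" using mxy by (simp add: I_mem)
  have myx: "m \<in> interval V E y x" using mxy I_sym[OF G(1) G(2) G(3)] by simp
  have mzx: "m \<in> interval V E z x" using mxz I_sym[OF G(1) G(2) G(4)] by simp
  have mzy: "m \<in> interval V E z y" using myz I_sym[OF G(1) G(3) G(4)] by simp
  have posX: "pos X = x" and posY: "pos Y = y" and posZ: "pos Z = z"
    unfolding pos_def loc_def by simp_all
  have posV: "\<And>u. pos u \<in> V" using G posX posY posZ by (metis agent.exhaust)
  have pm: "\<And>u v. u \<noteq> v \<Longrightarrow> m \<in> interval V E (pos u) (pos v)"
  proof -
    fix u v :: agent assume "u \<noteq> v"
    then show "m \<in> interval V E (pos u) (pos v)"
      using mxy mxz myz myx mzx mzy posX posY posZ by (cases u; cases v) auto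
  qed
  have bempty: "\<And>u. barg V E pos u m = {}"
  proof -
    fix u
    have "\<And>v. v \<noteq> u \<Longrightarrow> pref V E pos u m \<inter> pref V E pos v m = {}"
    proof -
      fix v assume "v \<noteq> u"
      then have "interval V E (pos u) m \<inter> interval V E (pos v) m \<subseteq> {m}"
        using meet[OF G(1) posV posV pm] by metis
      then show "pref V E pos u m \<inter> pref V E pos v m = {}" unfolding pref_def by blast
    qed
    then show "barg V E pos u m = {}" unfolding barg_def by blast
  qed
  have A: "\<And>p. tmr_step V E pos (m, p) = {Inr m}"
    unfolding tmr_step_def using bempty by (simp add: Let_def maj_true)
  have B: "m \<noteq> x \<Longrightarrow> \<exists>q. tmr_step V E pos (x, Y) = {Inl (m, q)}"
  proof -
    assume mx: "m \<noteq> x"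
    have prefX: "pref V E pos X x = {}"
    proof -
      have "\<And>a. a \<in> interval V E x x \<Longrightarrow> a = x"
      proof -
        fix a assume "a \<in> interval V E x x"
        then have "gdist E x a = 0" "a \<in> V" by (auto simp: I_mem gd_refl)
        then show "a = x" using gd_zero[OF G(1) G(2)] by metis
      qed
      then show ?thesis unfolding pref_def posX by blast
    qed
    have UY: "UNIV - {Y} = {X, Z}" using agent_UNIV by auto
    have bY: "barg V E pos Y x = pref V E pos Y x \<inter> pref V E pos Z x"
      unfolding barg_def UY using prefX by auto
    have mb: "m \<in> barg V E pos Y x" unfolding bY pref_def posY posZ using myx mzx mx by blast
    have dist: "\<And>a. a \<in> barg V E pos Y x \<Longrightarrow> gdist E y a = gdist E y m + gdist E m a \<and> a \<in> V"
    proof -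
      fix a assume "a \<in> barg V E pos Y x"
      then have a: "a \<in> interval V E y x" "a \<in> interval V E z x"
        unfolding bY pref_def posY posZ by auto
      have a1: "a \<in> interval V E x y" using a(1) I_sym[OF G(1) G(2) G(3)] by simp
      have a2: "a \<in> interval V E x z" using a(2) I_sym[OF G(1) G(2) G(4)] by simp
      have "a \<in> interval V E x m" using I_med[OF G a1 a2 mxy mxz myz] .
      then have "a \<in> interval V E m x" using I_sym[OF G(1) G(2) mV] by simp
      then show "gdist E y a = gdist E y m + gdist E m a \<and> a \<in> V"
        using I_mono[OF G(1) G(3) G(2) myx] by (auto simp: I_mem)
    qed
    have best: "\<And>a. best_barg V E pos Y x a \<longleftrightarrow> a = m"
    proof
      fix a assume "best_barg V E pos Y x a"
      then have ab: "a \<in> barg V E pos Y x" and le: "gdist E y a \<le> gdist E y m"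
        using mb unfolding best_barg_def posY by auto
      then have "gdist E m a = 0" "a \<in> V" using dist[OF ab] by auto
      then show "a = m" using gd_zero[OF G(1) mV] by metis
    next
      fix a assume "a = m"
      show "best_barg V E pos Y x a"
      proof -
        have "\<forall>b\<in>barg V E pos Y x. gdist E y m \<le> gdist E y b" using dist by simp
        then show ?thesis using mb \<open>a = m\<close> unfolding best_barg_def posY by blast
      qed
    qed
    define acc where "acc = (\<lambda>u. gdist E (pos u) m < gdist E (pos u) x)"
    have dmx: "gdist E m x \<noteq> 0" using gd_zero[OF G(1) mV G(2)] mx by blast
    have accY: "acc Y" proof -
      have "gdist E y m + gdist E m x = gdist E y x" using myx unfolding I_mem by blast
      then show ?thesis using dmx unfolding acc_def posY by linarith
    qed
    have accZ: "acc Z" proof -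
      have "gdist E z m + gdist E m x = gdist E z x" using mzx unfolding I_mem by blast
      then show ?thesis using dmx unfolding acc_def posZ by linarith
    qed
    have "{Y, Z} \<subseteq> {u. acc u}" using accY accZ by auto
    then have "card {Y, Z} \<le> card {u. acc u}" by (rule card_mono[rotated]) (metis agent_UNIV finite.emptyI finite.insertI finite_subset subset_UNIV)
    then have maj: "majority acc" unfolding majority_def by simp
    have "tmr_step V E pos (x, Y) = {Inl (m, next_proposer acc Y)}"
      proof -
      have ne: "barg V E pos Y x \<noteq> {}" using mb by blast
      have "{Inl (if majority acc' then a else x, next_proposer acc' Y) | a acc'.
            best_barg V E pos Y x a \<and>
            acc' = (\<lambda>u. gdist E (pos u) a < gdist E (pos u) x)} = {Inl (m, next_proposer acc Y)}"
        using best maj unfolding acc_def by auto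
      moreover have "tmr_step V E pos (x, Y) = {Inl (if majority acc' then a else x, next_proposer acc' Y) | a acc'.
            best_barg V E pos Y x a \<and>
            acc' = (\<lambda>u. gdist E (pos u) a < gdist E (pos u) x)}"
        unfolding tmr_step_def prod.case if_P[OF ne] ..
      ultimately show ?thesis by (simp only:)
    qed
    then show ?thesis by blast
  qed
  have inv: "\<And>s s'. tmr_cont V E pos s s' \<Longrightarrow> s = (x, Y) \<or> fst s = m \<Longrightarrow> fst s' = m"
  proof -
    fix s s' assume c: "tmr_cont V E pos s s'" and q: "s = (x, Y) \<or> fst s = m"
    have ns: "\<And>p. \<not> tmr_cont V E pos (m, p) s'" unfolding tmr_cont_def using A by simp
    show "fst s' = m"
    proof (cases "fst s = m")
      case True
      then show ?thesis using ns[of "snd s"] c by (metis prod.collapse)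
    next
      case False
      then have s: "s = (x, Y)" "m \<noteq> x" using q by auto
      then obtain q where "tmr_step V E pos (x, Y) = {Inl (m, q)}" using B by blast
      then show ?thesis using c s unfolding tmr_cont_def by simp
    qed
  qed
  have reach: "\<And>s. (tmr_cont V E pos)\<^sup>*\<^sup>* (x, Y) s \<Longrightarrow> s = (x, Y) \<or> fst s = m"
  proof -
    fix s assume "(tmr_cont V E pos)\<^sup>*\<^sup>* (x, Y) s"
    then show "s = (x, Y) \<or> fst s = m"
      by (induction rule: rtranclp_induct) (use inv in blast)+
  qed
  have part2: "\<forall>s. (tmr_cont V E pos)\<^sup>*\<^sup>* (x, Y) s \<longrightarrow>
               tmr_step V E pos s \<noteq> {} \<and>
               (\<forall>w'. Inr w' \<in> tmr_step V E pos s \<longrightarrow> w' = m)"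
  proof (intro allI impI)
    fix s assume "(tmr_cont V E pos)\<^sup>*\<^sup>* (x, Y) s"
    then have q: "s = (x, Y) \<or> fst s = m" by (rule reach)
    show "tmr_step V E pos s \<noteq> {} \<and> (\<forall>w'. Inr w' \<in> tmr_step V E pos s \<longrightarrow> w' = m)"
    proof (cases "fst s = m")
      case True
      then have "s = (m, snd s)" by (metis prod.collapse)
      then show ?thesis using A by (metis empty_iff insert_iff sum.inject(2))
    next
      case False
      then have s: "s = (x, Y)" "m \<noteq> x" using q by auto
      then obtain q where "tmr_step V E pos (x, Y) = {Inl (m, q)}" using B by blast
      then show ?thesis using s by simp
    qed
  qed
  have part1: "\<not> (\<exists>f. f 0 = (x, Y) \<and> (\<forall>n. tmr_cont V E pos (f n) (f (Suc n))))"
  proof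
    assume "\<exists>f. f 0 = (x, Y) \<and> (\<forall>n. tmr_cont V E pos (f n) (f (Suc n)))"
    then obtain f where f0: "f 0 = (x, Y)" and fs: "\<And>n. tmr_cont V E pos (f n) (f (Suc n))" by blast
    have "fst (f 1) = m" using inv[OF fs[of 0]] f0 by simp
    then have "f 1 = (m, snd (f 1))" by (metis prod.collapse)
    then have "Inl (f 2) \<in> {Inr m}" using fs[of 1] A unfolding tmr_cont_def
      by (metis numeral_2_eq_2 One_nat_def)
    then show False by simp
  qed
  show ?thesis using part1 part2 unfolding m_def by blast
qed

end
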